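(* For $\alpha\in\mathbb{K}^\times$ let $A_{8,\alpha}$ be the evolution algebra over the field $\mathbb{K}$ with natural basis $\{u,v\}$ such that $u^2=u$ and $v^2=\alpha u$. For $\alpha,\beta\in\mathbb{K}^\times$, $A_{8,\alpha}$ and $A_{8,\beta}$ are isomorphic if and only if $\overline\alpha=\overline\beta$ in $G_2=\mathbb{K}^\times/(\mathbb{K}^\times)^2$.
   Context: An evolution algebra over $\mathbb{K}$ is a $\mathbb{K}$-algebra with a basis $\{e_i\}$ (natural basis) such that $e_ie_j=0$ for $i\neq j$. $\overline\rho$ denotes the class of $\rho\in\mathbb{K}^\times$ in $G_2$. *)

theory Defs
  imports Main
begin

text \<open>Elements of a 2-dimensional K-algebra with natural basis {u,v} are
coordinate pairs (a,b) meaning a u + b v.  Vector space operations on K x K:\<close>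

definition vadd :: "'a::field \<times> 'a \<Rightarrow> 'a \<times> 'a \<Rightarrow> 'a \<times> 'a" where
  "vadd x y = (fst x + fst y, snd x + snd y)"

definition vscale :: "'a::field \<Rightarrow> 'a \<times> 'a \<Rightarrow> 'a \<times> 'a" where
  "vscale c x = (c * fst x, c * snd x)"

text \<open>Multiplication of the evolution algebra A_{8,alpha}: u^2 = u, v^2 = alpha u, uv = vu = 0,
extended bilinearly: (a u + b v)(c u + d v) = (a c + alpha b d) u.\<close>

definition A8_mult :: "'a::field \<Rightarrow> 'a \<times> 'a \<Rightarrow> 'a \<times> 'a \<Rightarrow> 'a \<times> 'a" where
  "A8_mult \<alpha> x y = (fst x * fst y + \<alpha> * (snd x * snd y), 0)"

definition A8_iso :: "'a::field \<Rightarrow> 'a \<Rightarrow> ('a \<times> 'a \<Rightarrow> 'a \<times> 'a) \<Rightarrow> bool" where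
  "A8_iso \<alpha> \<beta> f \<longleftrightarrow> bij f
     \<and> (\<forall>x y. f (vadd x y) = vadd (f x) (f y))
     \<and> (\<forall>c x. f (vscale c x) = vscale c (f x))
     \<and> (\<forall>x y. f (A8_mult \<alpha> x y) = A8_mult \<beta> (f x) (f y))"

definition A8_isomorphic :: "'a::field \<Rightarrow> 'a \<Rightarrow> bool" where
  "A8_isomorphic \<alpha> \<beta> \<longleftrightarrow> (\<exists>f. A8_iso \<alpha> \<beta> f)"

definition same_square_class :: "'a::field \<Rightarrow> 'a \<Rightarrow> bool" where
  "same_square_class \<alpha> \<beta> \<longleftrightarrow> (\<exists>\<gamma>. \<gamma> \<noteq> 0 \<and> \<alpha> = \<gamma>^2 * \<beta>)"

end

theory Submission
  imports Defs
begin

theorem lemma3p17: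
  fixes \<alpha> \<beta> :: "'a::field"
  assumes "\<alpha> \<noteq> 0" and "\<beta> \<noteq> 0"
  shows "A8_isomorphic \<alpha> \<beta> \<longleftrightarrow> same_square_class \<alpha> \<beta>"
proof
  assume "A8_isomorphic \<alpha> \<beta>"
  then obtain f where bf: "bij f" and ad: "\<forall>x y. f (vadd x y) = vadd (f x) (f y)"
    and sc: "\<forall>c x. f (vscale c x) = vscale c (f x)"
    and mu: "\<forall>x y. f (A8_mult \<alpha> x y) = A8_mult \<beta> (f x) (f y)"
    unfolding A8_isomorphic_def A8_iso_def by blast
  have inj: "inj f" using bf bij_is_inj by blast
  have f0: "f (0,0) = (0,0)" using sc[rule_format, of 0 "(0,0)"] by (simp add: vscale_def)
  obtain p q where fu: "f (1,0) = (p,q)" by (cases "f (1,0)")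
  obtain r s where fv: "f (0,1) = (r,s)" by (cases "f (0,1)")
  have "f (A8_mult \<alpha> (1,0) (1,0)) = A8_mult \<beta> (p,q) (p,q)" using mu fu by simp
  moreover have "A8_mult \<alpha> (1,0) (1,0) = (1,0)" by (simp add: A8_mult_def)
  ultimately have e1: "(p,q) = (p*p + \<beta>*(q*q), 0)" using fu by (simp only: A8_mult_def fst_conv snd_conv)
  have "(p,q) \<noteq> (0,0)" using inj f0 fu by (metis injD prod.inject zero_neq_one)
  have q0: "q = 0" using e1 by simp
  hence pp: "p * (p - 1) = 0" using e1 by (simp add: algebra_simps)
  have "p \<noteq> 0" using \<open>(p,q) \<noteq> (0,0)\<close> q0 by simp
  hence "p - 1 = 0" using pp by simp
  hence p1: "p = 1" "q = 0" using q0 by auto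
  have "f (A8_mult \<alpha> (1,0) (0,1)) = A8_mult \<beta> (p,q) (r,s)" using mu fu fv by simp
  hence r0: "r = 0" using f0 p1 by (simp add: A8_mult_def)
  have "(r,s) \<noteq> (0,0)" using inj f0 fv by (metis injD prod.inject zero_neq_one)
  hence s0: "s \<noteq> 0" using r0 by simp
  have "f (A8_mult \<alpha> (0,1) (0,1)) = A8_mult \<beta> (r,s) (r,s)" using mu fv by simp
  moreover have "A8_mult \<alpha> (0,1) (0,1) = vscale \<alpha> (1,0)" by (simp add: A8_mult_def vscale_def)
  ultimately have "vscale \<alpha> (p,q) = A8_mult \<beta> (r,s) (r,s)" using sc fu by metis
  hence "\<alpha> = s^2 * \<beta>" using p1 r0 by (simp add: vscale_def A8_mult_def power2_eq_square algebra_simps)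
  thus "same_square_class \<alpha> \<beta>" unfolding same_square_class_def using s0 by blast
next
  assume "same_square_class \<alpha> \<beta>"
  then obtain g where g: "g \<noteq> 0" "\<alpha> = g^2 * \<beta>" unfolding same_square_class_def by blast
  define f where "f = (\<lambda>x::'a\<times>'a. (fst x, g * snd x))"
  have "bij f"
  proof (rule bij_betwI')
    show "\<And>x y. (f x = f y) = (x = y)" using g(1) by (auto simp: f_def prod_eq_iff)
    show "\<And>y. \<exists>x\<in>UNIV. y = f x"
    proof -
      fix y :: "'a \<times> 'a"
      have "y = f (fst y, snd y / g)" using g(1) by (simp add: f_def)
      thus "\<exists>x\<in>UNIV. y = f x" by blast
    qed
  qed simp
  moreover have "\<forall>x y. f (vadd x y) = vadd (f x) (f y)"
    by (simp add: f_def vadd_def algebra_simps)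
  moreover have "\<forall>c x. f (vscale c x) = vscale c (f x)"
    by (simp add: f_def vscale_def algebra_simps)
  moreover have "\<forall>x y. f (A8_mult \<alpha> x y) = A8_mult \<beta> (f x) (f y)"
    using g by (simp add: f_def A8_mult_def power2_eq_square algebra_simps)
  ultimately show "A8_isomorphic \<alpha> \<beta>" unfolding A8_isomorphic_def A8_iso_def by blast
qed

end
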